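(* Let $\lambda\ge1$ and $\phi=e^{\lambda\psi}$. There exist $h_1=h_1(\lambda)>0$ and $C_\lambda>0$ such that for all $0<h\le h_1$, all $\tau>0$, $0<\delta<1/2$, $\Delta t>0$, and every fully-discrete function $z=(z^{n+1/2})_{n=0}^M$ with $z^{n+1/2}_0=z^{n+1/2}_{N+1}=0$, writing $s=\tau\theta$, $$ \begin{aligned} \tau\lambda^2\iint_Q\bar{\mathtt t}^-(\theta)\phi|\partial_h\bar{\mathtt t}^-z|^2&\ge\tau\lambda^2\iint_Q\bar{\mathtt t}^-(\theta)\phi|\overline{\partial_h\bar{\mathtt t}^-z}|^2+\frac{h^2\tau\lambda^2}{4}\iint_Q\bar{\mathtt t}^-(\theta)\phi|\Delta_h\bar{\mathtt t}^-z|^2\\ &\quad-C_\lambda h^2\iint_Q\bar{\mathtt t}^-(s)|\partial_h\bar{\mathtt t}^-z|^2-C_\lambda\iint_Q\bar{\mathtt t}^-(sh)|\overline{\partial_h\bar{\mathtt t}^-z}|^2-C_\lambda h^4\iint_Q\bar{\mathtt t}^-(s)|\Delta_h\bar{\mathtt t}^-z|^2. \end{aligned} $$ (In the first integral $\phi$ is sampled at the dual points $x_{i+1/2}$, in the others at the primal points $x_i$.)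
   Context: Grids: $\Omega=(0,L)$, $h=L/(N+1)$, $\Delta t=T/M$, $x_i=ih$, $x_{i+1/2}=(i+\frac12)h$, $t_{n\pm1/2}=(n\pm\frac12)\Delta t$. For a primal space function $u$: $(\partial_hu)_{i+1/2}=(u_{i+1}-u_i)/h$ ($i=0,\dots,N$), $\overline{\partial_h u}_i=(u_{i+1}-u_{i-1})/(2h)$ and $(\Delta_hu)_i=(u_{i+1}-2u_i+u_{i-1})/h^2$ ($i=1,\dots,N$). $\int_\Omega$ of a primal function is $\sum_{i=1}^Nh u_i$, of a dual function $\sum_{i=0}^Nhv_{i+1/2}$. For $n=1,\dots,M$, $(\bar{\mathtt t}^-z)^n=z^{n-1/2}$ and $\bar{\mathtt t}^-(f)$ is a continuous $f$ evaluated at $t_{n-1/2}$; $\iint_QF=\sum_{n=1}^M\Delta t\int_\Omega F^n$. Weights: $\psi\in C^k(\overline{\tilde\Omega})$, $k$ large, positive on an open interval $\tilde\Omega\supset[0,L]$; $\theta(t)=1/((t+\delta T)(T+\delta T-t))$. *)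

theory Defs
  imports "HOL-Analysis.Analysis"
begin

definition Ck_on :: "nat \<Rightarrow> real set \<Rightarrow> (real \<Rightarrow> real) \<Rightarrow> bool" where
  "Ck_on k S f \<longleftrightarrow>
     (\<forall>j<k. \<forall>x\<in>S. (deriv ^^ j) f differentiable (at x)) \<and>
     (\<forall>j\<le>k. continuous_on S ((deriv ^^ j) f))"

definition theta :: "real \<Rightarrow> real \<Rightarrow> real \<Rightarrow> real" where
  "theta T \<delta> t = 1 / ((t + \<delta> * T) * (T + \<delta> * T - t))"

definition tmid :: "real \<Rightarrow> nat \<Rightarrow> real" where
  "tmid dt n = (real n - 1/2) * dt"

text \<open>Discrete operators on a primal function u (u i = u_i).
  Dp h u i is the value at the dual point x_{i+1/2}.\<close>
definition Dp :: "real \<Rightarrow> (nat \<Rightarrow> real) \<Rightarrow> nat \<Rightarrow> real" where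
  "Dp h u i = (u (i + 1) - u i) / h"

definition Dc :: "real \<Rightarrow> (nat \<Rightarrow> real) \<Rightarrow> nat \<Rightarrow> real" where
  "Dc h u i = (u (i + 1) - u (i - 1)) / (2 * h)"

definition Lap :: "real \<Rightarrow> (nat \<Rightarrow> real) \<Rightarrow> nat \<Rightarrow> real" where
  "Lap h u i = (u (i + 1) - 2 * u i + u (i - 1)) / h ^ 2"

text \<open>Space-time discrete integrals; F n i is the value at time index n and
  space index i (i = 1..N primal, i = 0..N dual meaning x_{i+1/2}).\<close>
definition Qint_primal :: "nat \<Rightarrow> nat \<Rightarrow> real \<Rightarrow> real \<Rightarrow> (nat \<Rightarrow> nat \<Rightarrow> real) \<Rightarrow> real" where
  "Qint_primal M N dt h F = (\<Sum>n = 1..M. dt * (\<Sum>i = 1..N. h * F n i))"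

definition Qint_dual :: "nat \<Rightarrow> nat \<Rightarrow> real \<Rightarrow> real \<Rightarrow> (nat \<Rightarrow> nat \<Rightarrow> real) \<Rightarrow> real" where
  "Qint_dual M N dt h F = (\<Sum>n = 1..M. dt * (\<Sum>i = 0..N. h * F n i))"

end

theory Submission
  imports Defs
begin

lemma midpt:
  fixes G FA FB :: "real \<Rightarrow> real"
  assumes d1: "\<And>x. lo \<le> x \<Longrightarrow> x \<le> hi \<Longrightarrow> DERIV G x :> FA x"
    and d2: "\<And>x. lo \<le> x \<Longrightarrow> x \<le> hi \<Longrightarrow> DERIV FA x :> FB x"
    and bd: "\<And>x. lo \<le> x \<Longrightarrow> x \<le> hi \<Longrightarrow> \<bar>FB x\<bar> \<le> B"
    and "lo \<le> m - d" "m + d \<le> hi" "d > 0"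
  shows "G (m - d) + G (m + d) - 2 * G m \<le> 2 * B * d^2"
proof -
  obtain x1 where x1: "m < x1" "x1 < m + d" "G (m+d) - G m = (m + d - m) * FA x1"
    using MVT2[of m "m+d" G FA] d1 assms by force
  obtain x2 where x2: "m - d < x2" "x2 < m" "G m - G (m-d) = (m - (m - d)) * FA x2"
    using MVT2[of "m-d" m G FA] d1 assms by force
  obtain y where y: "x2 < y" "y < x1" "FA x1 - FA x2 = (x1 - x2) * FB y"
    using MVT2[of x2 x1 FA FB] d2 assms x1 x2 by force
  have yl: "lo \<le> y" "y \<le> hi" using y x1 x2 assms(4,5) by linarith+
  have "\<bar>FB y\<bar> \<le> B" by (rule bd[OF yl])
  hence GB: "FB y \<le> B" "B \<ge> 0" by linarith+
  hence "(x1 - x2) * FB y \<le> (x1 - x2) * B" using x1 x2 by (intro mult_left_mono) auto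
  also have "\<dots> \<le> (2*d) * B" using x1 x2 GB
    by (intro mult_right_mono) auto
  finally have "FA x1 - FA x2 \<le> 2*d*B" using y by simp
  hence "d * (FA x1 - FA x2) \<le> d * (2*d*B)" using assms by (intro mult_left_mono) auto
  moreover have "G (m - d) + G (m + d) - 2 * G m = d * (FA x1 - FA x2)"
    using x1 x2 by (simp add: algebra_simps)
  ultimately show ?thesis by (simp add: power2_eq_square algebra_simps)
qed

lemma telesc:
  fixes P e :: "nat \<Rightarrow> real"
  shows "(\<Sum>j=0..N. (P j + P (Suc j)) * e j) =
     (\<Sum>i=1..N. P i * (e i + e (i - 1))) + P 0 * e 0 + P (Suc N) * e N"
proof (induction N)
  case 0 then show ?case by (simp add: algebra_simps)
next
  case (Suc N)
  have "(\<Sum>i=1..Suc N. P i * (e i + e (i - 1))) = (\<Sum>i=1..N. P i * (e i + e (i - 1))) + P (Suc N) * (e (Suc N) + e N)"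
    by (simp add: sum.cl_ivl_Suc)
  then show ?case using Suc by (simp add: sum.atLeast0_atMost_Suc algebra_simps)
qed

lemma pt_id:
  assumes "h > 0" "i \<ge> 1"
  shows "Dc h u i ^2 + h^2/4 * Lap h u i ^2 = (Dp h u i ^2 + Dp h u (i - 1) ^2)/2"
proof -
  have "i - 1 + 1 = i" using assms by simp
  then show ?thesis using assms unfolding Dc_def Lap_def Dp_def
    by (simp add: field_simps power2_eq_square)
qed

lemma spatial:
  fixes h E :: real and P D :: "nat \<Rightarrow> real" and u :: "nat \<Rightarrow> real"
  assumes h: "h > 0" and P: "\<And>j. P j \<ge> 0"
    and D: "\<And>j. j \<le> N \<Longrightarrow> D j \<ge> (P j + P (Suc j))/2 - E"
  shows "(\<Sum>j=0..N. h*(D j * Dp h u j ^2)) \<ge> (\<Sum>i=1..N. h*(P i * Dc h u i^2))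
     + h^2/4*(\<Sum>i=1..N. h*(P i*Lap h u i^2)) - E*(\<Sum>j=0..N. h*Dp h u j^2)"
proof -
  define e where "e j = Dp h u j ^2" for j
  have "(\<Sum>j=0..N. h*(D j * Dp h u j ^2)) \<ge> (\<Sum>j=0..N. h*(((P j + P (Suc j))/2 - E) * e j))"
    unfolding e_def using D h by (intro sum_mono mult_left_mono mult_right_mono) auto
  also have "(\<Sum>j=0..N. h*(((P j + P (Suc j))/2 - E) * e j)) =
     (\<Sum>j=0..N. h/2 * ((P j + P (Suc j)) * e j) - E*(h*e j))"
    by (intro sum.cong refl) (simp add: algebra_simps)
  also have "\<dots> = h/2 * (\<Sum>j=0..N. (P j + P (Suc j)) * e j) - E*(\<Sum>j=0..N. h*e j)"
    by (simp add: sum_distrib_left sum_subtractf)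
  also have "\<dots> = h/2 * ((\<Sum>i=1..N. P i * (e i + e (i - 1))) + P 0 * e 0 + P (Suc N) * e N) - E*(\<Sum>j=0..N. h*e j)"
    by (simp add: telesc)
  finally have 1: "(\<Sum>j=0..N. h*(D j * Dp h u j ^2)) \<ge> h/2 * ((\<Sum>i=1..N. P i * (e i + e (i - 1))) + P 0 * e 0 + P (Suc N) * e N) - E*(\<Sum>j=0..N. h*e j)" .
  have nn: "h/2 * (P 0 * e 0 + P (Suc N) * e N) \<ge> 0" using h P unfolding e_def by simp
  have "(\<Sum>i=1..N. h*(P i * Dc h u i^2)) + h^2/4*(\<Sum>i=1..N. h*(P i*Lap h u i^2))
     = (\<Sum>i=1..N. h*P i * (Dc h u i^2 + h^2/4 * Lap h u i^2))"
    by (simp add: sum_distrib_left sum.distrib[symmetric] algebra_simps)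
  also have "\<dots> = (\<Sum>i=1..N. h*P i * ((e i + e (i - 1))/2))"
  proof (intro sum.cong refl)
    fix i assume "i \<in> {1..N}"
    then have "Dc h u i ^2 + h^2/4 * Lap h u i ^2 = (e i + e (i - 1))/2"
      using pt_id[of h i u] h by (simp add: e_def)
    then show "h * P i * (Dc h u i^2 + h^2/4 * Lap h u i^2) = h*P i * ((e i + e (i - 1))/2)" by simp
  qed
  also have "\<dots> = (\<Sum>i=1..N. h/2 * (P i * (e i + e (i - 1))))"
    by (intro sum.cong refl) (simp add: algebra_simps)
  also have "\<dots> = h/2 * (\<Sum>i=1..N. P i * (e i + e (i - 1)))"
    by (simp add: sum_distrib_left)
  finally have 2: "(\<Sum>i=1..N. h*(P i * Dc h u i^2)) + h^2/4*(\<Sum>i=1..N. h*(P i*Lap h u i^2)) = h/2 * (\<Sum>i=1..N. P i * (e i + e (i - 1)))" .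
  show ?thesis using 1 2 nn unfolding e_def by (simp add: algebra_simps)
qed

theorem lemma2:
  fixes L T a b lam :: real and k :: nat and \<psi> :: "real \<Rightarrow> real"
  assumes "L > 0" and "T > 0" and "a < 0" and "L < b"
    and "k \<ge> 2" and "Ck_on k {a<..<b} \<psi>" and "\<forall>x\<in>{a<..<b}. \<psi> x > 0"
    and "lam \<ge> 1"
  shows "\<exists>h1 > 0. \<exists>C > 0. \<forall>N M h dt \<tau> \<delta> (z :: nat \<Rightarrow> nat \<Rightarrow> real).
     h = L / real (N + 1) \<longrightarrow> h \<le> h1 \<longrightarrow> M \<ge> 1 \<longrightarrow> dt = T / real M \<longrightarrow>
     \<tau> > 0 \<longrightarrow> 0 < \<delta> \<longrightarrow> \<delta> < 1/2 \<longrightarrow>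
     (\<forall>n \<le> M. z n 0 = 0 \<and> z n (N + 1) = 0) \<longrightarrow>
     \<tau> * lam^2 * Qint_dual M N dt h (\<lambda>n i. theta T \<delta> (tmid dt n)
          * exp (lam * \<psi> ((real i + 1/2) * h)) * (Dp h (z (n - 1)) i)^2)
     \<ge> \<tau> * lam^2 * Qint_primal M N dt h (\<lambda>n i. theta T \<delta> (tmid dt n)
          * exp (lam * \<psi> (real i * h)) * (Dc h (z (n - 1)) i)^2)
       + h^2 * \<tau> * lam^2 / 4 * Qint_primal M N dt h (\<lambda>n i. theta T \<delta> (tmid dt n)
          * exp (lam * \<psi> (real i * h)) * (Lap h (z (n - 1)) i)^2)
       - C * h^2 * Qint_dual M N dt h (\<lambda>n i. \<tau> * theta T \<delta> (tmid dt n)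
          * (Dp h (z (n - 1)) i)^2)
       - C * Qint_primal M N dt h (\<lambda>n i. \<tau> * theta T \<delta> (tmid dt n) * h
          * (Dc h (z (n - 1)) i)^2)
       - C * h^4 * Qint_primal M N dt h (\<lambda>n i. \<tau> * theta T \<delta> (tmid dt n)
          * (Lap h (z (n - 1)) i)^2)"
proof -
  let ?S = "{a<..<b}"
  have ck: "(\<forall>j<k. \<forall>x\<in>?S. (deriv ^^ j) \<psi> differentiable (at x))"
     "(\<forall>j\<le>k. continuous_on ?S ((deriv ^^ j) \<psi>))"
    using assms(6) unfolding Ck_on_def by auto
  have "(deriv ^^ 0) \<psi> = \<psi>" "(deriv ^^ 1) \<psi> = deriv \<psi>" "(deriv ^^ 2) \<psi> = deriv (deriv \<psi>)"
    by (simp_all add: numeral_2_eq_2)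
  with ck assms(5) have dif0: "\<And>x. x \<in> ?S \<Longrightarrow> \<psi> differentiable (at x)"
    and dif1: "\<And>x. x \<in> ?S \<Longrightarrow> deriv \<psi> differentiable (at x)"
    and c0: "continuous_on ?S \<psi>" and c1: "continuous_on ?S (deriv \<psi>)"
    and c2: "continuous_on ?S (deriv (deriv \<psi>))"
    by (metis le_trans one_le_numeral less_le_trans less_numeral_extra(1) numeral_le_one_iff
          semiring_norm(69) zero_le le_numeral_extra(4) one_less_numeral_iff semiring_norm(76))+
  have d0: "\<And>x. x \<in> ?S \<Longrightarrow> (\<psi> has_real_derivative deriv \<psi> x) (at x)"
    using dif0 DERIV_deriv_iff_real_differentiable by blast
  have d1: "\<And>x. x \<in> ?S \<Longrightarrow> (deriv \<psi> has_real_derivative deriv (deriv \<psi>) x) (at x)"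
    using dif1 DERIV_deriv_iff_real_differentiable by blast
  define g where "g x = exp (lam * \<psi> x)" for x
  define g1 where "g1 x = exp (lam * \<psi> x) * (lam * deriv \<psi> x)" for x
  define g2 where "g2 x = exp (lam * \<psi> x) * (lam * deriv \<psi> x) * (lam * deriv \<psi> x)
      + exp (lam * \<psi> x) * (lam * deriv (deriv \<psi>) x)" for x
  have G1: "(g has_real_derivative g1 x) (at x)" if "x \<in> ?S" for x
    unfolding g_def g1_def using d0[OF that]
    by (auto intro!: derivative_eq_intros)
  have G2: "(g1 has_real_derivative g2 x) (at x)" if "x \<in> ?S" for x
    unfolding g2_def g1_def using d0[OF that] d1[OF that]
    by (auto intro!: derivative_eq_intros simp: algebra_simps)
  have cg2: "continuous_on {0..L} g2"
  proof -
    have "continuous_on ?S g2" unfolding g2_def using c0 c1 c2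
      by (intro continuous_intros) auto
    moreover have "{0..L} \<subseteq> ?S" using assms by auto
    ultimately show ?thesis by (rule continuous_on_subset)
  qed
  have "compact (g2 ` {0..L})" by (rule compact_continuous_image[OF cg2 compact_Icc])
  then obtain B where B: "\<And>x. x \<in> {0..L} \<Longrightarrow> \<bar>g2 x\<bar> \<le> B"
    using compact_imp_bounded bounded_iff by (metis image_eqI real_norm_def)
  have B0: "B \<ge> 0" using B[of 0] assms(1) by force
  define C where "C = lam^2 * B / 4 + 1"
  have C0: "C > 0" unfolding C_def using B0 by (simp add: add_nonneg_pos)
  show ?thesis
  proof (rule exI[of _ 1], rule conjI, simp, rule exI[of _ C], rule conjI[OF C0], intro allI impI)
    fix N M :: nat and h dt \<tau> \<delta> :: real and z :: "nat \<Rightarrow> nat \<Rightarrow> real"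
    assume hdef: "h = L / real (N + 1)" and "h \<le> 1" and M1: "M \<ge> 1" and dtdef: "dt = T / real M"
      and tau: "\<tau> > 0" and dl: "0 < \<delta>" "\<delta> < 1/2"
      and "\<forall>n \<le> M. z n 0 = 0 \<and> z n (N + 1) = 0"
    have h0: "h > 0" using hdef assms(1) by simp
    have hN: "real (N+1) * h = L" using hdef by simp
    have dt0: "dt > 0" using dtdef assms(2) M1 by simp
    define P where "P j = exp (lam * \<psi> (real j * h))" for j
    define D where "D j = exp (lam * \<psi> ((real j + 1/2) * h))" for j
    define E where "E = B * h^2 / 4"
    have Pnn: "\<And>j. P j \<ge> 0" unfolding P_def by simp
    have DP: "D j \<ge> (P j + P (Suc j))/2 - E" if "j \<le> N" for j
    proof -
      have jl: "(real j + 1) * h \<le> L" using that hN h0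
        by (metis add.commute mult_right_mono of_nat_1 of_nat_add of_nat_le_iff add_le_cancel_left less_imp_le)
      have mid: "g ((real j + 1/2) * h - h/2) + g ((real j + 1/2) * h + h/2) - 2 * g ((real j + 1/2) * h) \<le> 2 * B * (h/2)^2"
      proof (rule midpt[where lo=0 and hi=L and FA=g1 and FB=g2])
        fix x assume "0 \<le> x" "x \<le> L"
        then have "x \<in> ?S" using assms by auto
        then show "(g has_real_derivative g1 x) (at x)" "(g1 has_real_derivative g2 x) (at x)"
          using G1 G2 by auto
        show "\<bar>g2 x\<bar> \<le> B" using B \<open>0 \<le> x\<close> \<open>x \<le> L\<close> by auto
      next
        show "0 \<le> (real j + 1/2) * h - h/2" using h0 by simp
        show "(real j + 1/2) * h + h/2 \<le> L" using jl by (simp add: algebra_simps)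
        show "h/2 > 0" using h0 by simp
      qed
      have eqs: "(real j + 1/2) * h - h/2 = real j * h" "(real j + 1/2) * h + h/2 = real (Suc j) * h"
        by (simp_all add: algebra_simps)
      have "2 * B * (h/2)^2 = 2 * E" unfolding E_def by (simp add: power2_eq_square)
      with mid have "g (real j * h) + g (real (Suc j) * h) - 2 * g ((real j + 1/2) * h) \<le> 2 * E"
        unfolding eqs by simp
      then show ?thesis unfolding D_def P_def g_def by (simp add: field_simps)
    qed
    define th where "th n = theta T \<delta> (tmid dt n)" for n
    define XD where "XD n = (\<Sum>i=0..N. h * (theta T \<delta> (tmid dt n)
          * exp (lam * \<psi> ((real i + 1/2) * h)) * (Dp h (z (n - 1)) i)^2))" for n
    define XP1 where "XP1 n = (\<Sum>i=1..N. h * (theta T \<delta> (tmid dt n)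
          * exp (lam * \<psi> (real i * h)) * (Dc h (z (n - 1)) i)^2))" for n
    define XP2 where "XP2 n = (\<Sum>i=1..N. h * (theta T \<delta> (tmid dt n)
          * exp (lam * \<psi> (real i * h)) * (Lap h (z (n - 1)) i)^2))" for n
    define XD' where "XD' n = (\<Sum>i=0..N. h * (\<tau> * theta T \<delta> (tmid dt n)
          * (Dp h (z (n - 1)) i)^2))" for n
    define XP3 where "XP3 n = (\<Sum>i=1..N. h * (\<tau> * theta T \<delta> (tmid dt n) * h
          * (Dc h (z (n - 1)) i)^2))" for n
    define XP4 where "XP4 n = (\<Sum>i=1..N. h * (\<tau> * theta T \<delta> (tmid dt n)
          * (Lap h (z (n - 1)) i)^2))" for n
    have key: "0 \<le> \<tau>*lam^2*(dt*XD n) - \<tau>*lam^2*(dt*XP1 n) - h^2*\<tau>*lam^2/4*(dt*XP2 n)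
       + C*h^2*(dt*XD' n) + C*(dt*XP3 n) + C*h^4*(dt*XP4 n)" if n: "n \<in> {1..M}" for n
    proof -
      have nn: "real n \<ge> 1" "real n \<le> real M" using n by auto
      have TM: "T = real M * dt" using dtdef M1 by simp
      have tpos: "tmid dt n > 0" "tmid dt n < T" unfolding tmid_def TM
        using nn dt0 by (auto intro!: mult_pos_pos mult_strict_right_mono)
      have dT: "\<delta> * T > 0" using dl assms(2) by simp
      have thp: "th n > 0" unfolding th_def theta_def using tpos dT
        by (intro divide_pos_pos mult_pos_pos) auto
      define u where "u = z (n - 1)"
      define SD where "SD = (\<Sum>j=0..N. h*(D j * Dp h u j ^2))"
      define S1 where "S1 = (\<Sum>i=1..N. h*(P i * Dc h u i^2))"
      define S2 where "S2 = (\<Sum>i=1..N. h*(P i * Lap h u i^2))"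
      define SE where "SE = (\<Sum>j=0..N. h*Dp h u j^2)"
      have sp: "SD \<ge> S1 + h^2/4*S2 - E*SE" unfolding SD_def S1_def S2_def SE_def
        by (rule spatial[where P=P and D=D, OF h0 Pnn DP])
      have eD: "XD n = th n * SD" unfolding XD_def SD_def th_def D_def u_def sum_distrib_left
        by (intro sum.cong refl) (simp add: algebra_simps)
      have e1: "XP1 n = th n * S1" unfolding XP1_def S1_def th_def P_def u_def sum_distrib_left
        by (intro sum.cong refl) (simp add: algebra_simps)
      have e2: "XP2 n = th n * S2" unfolding XP2_def S2_def th_def P_def u_def sum_distrib_left
        by (intro sum.cong refl) (simp add: algebra_simps)
      have e3: "XD' n = \<tau> * th n * SE" unfolding XD'_def SE_def th_def u_def sum_distrib_left
        by (intro sum.cong refl) (simp add: algebra_simps)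
      have n3: "XP3 n \<ge> 0" unfolding XP3_def using h0 tau thp unfolding th_def
        by (intro sum_nonneg) simp
      have n4: "XP4 n \<ge> 0" unfolding XP4_def using h0 tau thp unfolding th_def
        by (intro sum_nonneg) simp
      have SE0: "SE \<ge> 0" unfolding SE_def using h0 by (intro sum_nonneg) simp
      define K where "K = \<tau>*lam^2*dt*th n"
      have K0: "K \<ge> 0" unfolding K_def using tau dt0 thp by simp
      have "K*SD \<ge> K*(S1 + h^2/4*S2 - E*SE)" using sp K0 by (rule mult_left_mono)
      moreover have "K*E*SE \<le> C*h^2*(dt*(\<tau>*th n*SE))"
      proof -
        have "C*h^2*(dt*(\<tau>*th n*SE)) - K*E*SE = h^2*dt*\<tau>*th n*SE"
          unfolding C_def K_def E_def by (simp add: algebra_simps)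
        moreover have "h^2*dt*\<tau>*th n*SE \<ge> 0" using h0 dt0 tau thp SE0 by simp
        ultimately show ?thesis by linarith
      qed
      moreover have "C*(dt*XP3 n) \<ge> 0" "C*h^4*(dt*XP4 n) \<ge> 0" using C0 dt0 n3 n4 by simp_all
      ultimately show ?thesis unfolding eD e1 e2 e3 K_def by (simp add: algebra_simps)
    qed
    have "0 \<le> (\<Sum>n=1..M. \<tau>*lam^2*(dt*XD n) - \<tau>*lam^2*(dt*XP1 n) - h^2*\<tau>*lam^2/4*(dt*XP2 n)
       + C*h^2*(dt*XD' n) + C*(dt*XP3 n) + C*h^4*(dt*XP4 n))"
      by (rule sum_nonneg) (rule key)
    then have "0 \<le> \<tau>*lam^2*(\<Sum>n=1..M. dt*XD n) - \<tau>*lam^2*(\<Sum>n=1..M. dt*XP1 n) - h^2*\<tau>*lam^2/4*(\<Sum>n=1..M. dt*XP2 n)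
       + C*h^2*(\<Sum>n=1..M. dt*XD' n) + C*(\<Sum>n=1..M. dt*XP3 n) + C*h^4*(\<Sum>n=1..M. dt*XP4 n)"
      by (simp only: sum.distrib sum_subtractf sum_distrib_left)
    then show "\<tau> * lam^2 * Qint_dual M N dt h (\<lambda>n i. theta T \<delta> (tmid dt n)
          * exp (lam * \<psi> ((real i + 1/2) * h)) * (Dp h (z (n - 1)) i)^2)
     \<ge> \<tau> * lam^2 * Qint_primal M N dt h (\<lambda>n i. theta T \<delta> (tmid dt n)
          * exp (lam * \<psi> (real i * h)) * (Dc h (z (n - 1)) i)^2)
       + h^2 * \<tau> * lam^2 / 4 * Qint_primal M N dt h (\<lambda>n i. theta T \<delta> (tmid dt n)
          * exp (lam * \<psi> (real i * h)) * (Lap h (z (n - 1)) i)^2)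
       - C * h^2 * Qint_dual M N dt h (\<lambda>n i. \<tau> * theta T \<delta> (tmid dt n)
          * (Dp h (z (n - 1)) i)^2)
       - C * Qint_primal M N dt h (\<lambda>n i. \<tau> * theta T \<delta> (tmid dt n) * h
          * (Dc h (z (n - 1)) i)^2)
       - C * h^4 * Qint_primal M N dt h (\<lambda>n i. \<tau> * theta T \<delta> (tmid dt n)
          * (Lap h (z (n - 1)) i)^2)"
      unfolding Qint_dual_def Qint_primal_def XD_def[symmetric] XP1_def[symmetric] XP2_def[symmetric]
        XD'_def[symmetric] XP3_def[symmetric] XP4_def[symmetric]
      by linarith
  qed
qed

end
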